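(* Let $d,T\ge 1$ be integers, let $c\ge 0$, and let $\boldsymbol\theta_0,\dots,\boldsymbol\theta_{T-1}\in\mathbb{R}^{d\times d}$ be orthogonal matrices. Define $\lambda_T=0$ and, for $t=T-1,\dots,0$, $\lambda_t=\frac{c(1+\lambda_{t+1})}{1+c+\lambda_{t+1}}$ (so $\lambda_{T-1}=\frac{c}{1+c}$), and set $\alpha_t=\frac{c}{1+\lambda_{t+1}+c}$ for $t=0,\dots,T-1$. Let $Z_0^{\parallel},\dots,Z_{T}^{\parallel}\subseteq\mathbb{R}^d$ be linear subspaces with $\boldsymbol\theta_t Z_t^{\parallel}=Z_{t+1}^{\parallel}$ for all $t$, let $\mathbf{P}_t$ be the orthogonal projection onto $Z_t^{\parallel}$, and define the feedback controls $\pi_t(\mathbf{x})=-(1-\alpha_t)(\mathbf{I}-\mathbf{P}_t)\mathbf{x}$. Let $\mathbf{x}_0\in Z_0^{\parallel}$ and let $\mathbf{x}_{t+1}=\boldsymbol\theta_t\mathbf{x}_t$ (unperturbed, uncontrolled trajectory). Let $\mathbf{z}=\mathbf{z}^{\parallel}+\mathbf{z}^{\perp}$ with $\mathbf{z}^{\parallel}\in Z_0^{\parallel}$ and $\mathbf{z}^{\perp}\in (Z_0^{\parallel})^{\perp}$, and define the perturbed controlled trajectory $\overline{\mathbf{x}}_0=\mathbf{x}_0+\mathbf{z}$, $\overline{\mathbf{x}}_{t+1}=\boldsymbol\theta_t(\overline{\mathbf{x}}_t+\pi_t(\overline{\mathbf{x}}_t))$. Then for every $1\le t\le T$, $$\lVert\overline{\mathbf{x}}_t-\mathbf{x}_t\rVert_2^2=\Big(\prod_{s=0}^{t-1}\alpha_s^2\Big)\lVert\mathbf{z}^{\perp}\rVert_2^2+\lVert\mathbf{z}^{\parallel}\rVert_2^2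 .$$
   Context: This models a $T$-layer network whose layer maps are linearized as orthogonal matrices $\boldsymbol\theta_t$, with a linear "embedding subspace" $Z_t^{\parallel}$ of the data at each layer (the unperturbed input lies in $Z_0^{\parallel}$). The control $\pi_t$ is the analytic optimal feedback control $\pi_t(\mathbf{x})=-\mathbf{V}_t\,\mathrm{diag}(0,\dots,0,1-\alpha_t,\dots,1-\alpha_t)\mathbf{V}_t^\top\mathbf{x}$, where $\mathbf{V}_t$ is an orthogonal matrix whose first columns span $Z_t^{\parallel}$ and whose remaining columns (those with entry $1-\alpha_t$) span its orthogonal complement; this equals $-(1-\alpha_t)(\mathbf{I}-\mathbf{P}_t)\mathbf{x}$. *)

theory Defs
  imports "HOL-Analysis.Analysis"
begin

definition orth_proj :: "'a::euclidean_space set \<Rightarrow> 'a \<Rightarrow> 'a" where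
  "orth_proj S x = (THE p. p \<in> S \<and> (\<forall>y\<in>S. orthogonal (x - p) y))"

fun lam_rev :: "real \<Rightarrow> nat \<Rightarrow> real" where
  "lam_rev c 0 = 0"
| "lam_rev c (Suc k) = c * (1 + lam_rev c k) / (1 + c + lam_rev c k)"

definition lam :: "nat \<Rightarrow> real \<Rightarrow> nat \<Rightarrow> real" where
  "lam T c t = lam_rev c (T - t)"

definition alpha :: "nat \<Rightarrow> real \<Rightarrow> nat \<Rightarrow> real" where
  "alpha T c t = c / (1 + lam T c (t + 1) + c)"

definition ctrl :: "nat \<Rightarrow> real \<Rightarrow> (nat \<Rightarrow> 'a::euclidean_space set) \<Rightarrow> nat \<Rightarrow> 'a \<Rightarrow> 'a" where
  "ctrl T c Z t x = - ((1 - alpha T c t) *\<^sub>R (x - orth_proj (Z t) x))"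

fun traj :: "(nat \<Rightarrow> real^'n^'n) \<Rightarrow> real^'n \<Rightarrow> nat \<Rightarrow> real^'n" where
  "traj \<theta> x0 0 = x0"
| "traj \<theta> x0 (Suc t) = \<theta> t *v traj \<theta> x0 t"

fun ctraj :: "nat \<Rightarrow> real \<Rightarrow> (nat \<Rightarrow> (real^'n) set) \<Rightarrow> (nat \<Rightarrow> real^'n^'n) \<Rightarrow> real^'n \<Rightarrow> nat \<Rightarrow> real^'n" where
  "ctraj T c Z \<theta> y0 0 = y0"
| "ctraj T c Z \<theta> y0 (Suc t) =
     \<theta> t *v (ctraj T c Z \<theta> y0 t + ctrl T c Z t (ctraj T c Z \<theta> y0 t))"

end

theory Submission
  imports Defs
begin

lemma orth_proj_eq:
  assumes S: "subspace S" and p: "p \<in> S" and o: "\<forall>y\<in>S. orthogonal (x - p) y"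
  shows "orth_proj S x = p"
  unfolding orth_proj_def
proof (rule the_equality)
  show "p \<in> S \<and> (\<forall>y\<in>S. orthogonal (x - p) y)" using p o by blast
next
  fix q assume q: "q \<in> S \<and> (\<forall>y\<in>S. orthogonal (x - q) y)"
  have d: "p - q \<in> S" using S p q by (simp add: subspace_diff)
  have "(x - q) \<bullet> (p - q) = 0" "(x - p) \<bullet> (p - q) = 0"
    using q o d by (auto simp: orthogonal_def)
  then have "(p - q) \<bullet> (p - q) = 0"
    by (simp add: inner_diff_left inner_diff_right algebra_simps)
  then show "q = p" by simp
qed

lemma orth_inner:
  fixes Q :: "real^'n^'n"
  assumes "orthogonal_matrix Q"
  shows "(Q *v x) \<bullet> (Q *v y) = x \<bullet> y"
proof -
  have "orthogonal_transformation (\<lambda>v. Q *v v)"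
    using assms orthogonal_transformation_matrix[of "\<lambda>v. Q *v v"]
    by (simp add: matrix_vector_mul_linear)
  then show ?thesis by (simp add: orthogonal_transformation_def)
qed

lemma orth_norm:
  fixes Q :: "real^'n^'n"
  assumes "orthogonal_matrix Q"
  shows "norm (Q *v x) = norm x"
  using orth_inner[OF assms, of x x] by (simp add: norm_eq_sqrt_inner)

theorem theorem1:
  fixes T :: nat and c :: real
    and \<theta> :: "nat \<Rightarrow> real^'n^'n"
    and Z :: "nat \<Rightarrow> (real^'n) set"
    and x0 zpar zperp :: "real^'n"
  assumes "T \<ge> 1" and "c \<ge> 0"
    and "\<And>t. t < T \<Longrightarrow> orthogonal_matrix (\<theta> t)"
    and "\<And>t. t \<le> T \<Longrightarrow> subspace (Z t)"
    and "\<And>t. t < T \<Longrightarrow> (\<lambda>v. \<theta> t *v v) ` Z t = Z (Suc t)"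
    and "x0 \<in> Z 0"
    and "zpar \<in> Z 0" and "zperp \<in> orthogonal_comp (Z 0)"
  shows "\<forall>t. 1 \<le> t \<and> t \<le> T \<longrightarrow>
    (norm (ctraj T c Z \<theta> (x0 + (zpar + zperp)) t - traj \<theta> x0 t))\<^sup>2
      = (\<Prod>s<t. (alpha T c s)\<^sup>2) * (norm zperp)\<^sup>2 + (norm zpar)\<^sup>2"
proof -
  note orthM = assms(3) and sub = assms(4) and img = assms(5)
  let ?y = "ctraj T c Z \<theta> (x0 + (zpar + zperp))"
  have inv: "\<exists>a b. ?y t = traj \<theta> x0 t + a + b \<and> traj \<theta> x0 t \<in> Z t \<and> a \<in> Z t
      \<and> b \<in> orthogonal_comp (Z t) \<and> norm a = norm zpar
      \<and> (norm b)\<^sup>2 = (\<Prod>s<t. (alpha T c s)\<^sup>2) * (norm zperp)\<^sup>2" if "t \<le> T" for t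
    using that
  proof (induction t)
    case 0
    show ?case
      by (rule exI[of _ zpar], rule exI[of _ zperp]) (use assms(6-8) in \<open>auto simp: add.assoc\<close>)
  next
    case (Suc t)
    then have tT: "t < T" by simp
    from Suc.IH tT obtain a b where y: "?y t = traj \<theta> x0 t + a + b" and x: "traj \<theta> x0 t \<in> Z t"
      and a: "a \<in> Z t" and b: "b \<in> orthogonal_comp (Z t)" and na: "norm a = norm zpar"
      and nb: "(norm b)\<^sup>2 = (\<Prod>s<t. (alpha T c s)\<^sup>2) * (norm zperp)\<^sup>2" by auto
    have S: "subspace (Z t)" using sub tT by simp
    have pz: "traj \<theta> x0 t + a \<in> Z t" using S x a by (simp add: subspace_add)
    have "orth_proj (Z t) (?y t) = traj \<theta> x0 t + a"
      apply (rule orth_proj_eq[OF S pz])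
      using b y by (auto simp: orthogonal_comp_def orthogonal_def inner_commute)
    then have step: "?y (Suc t) = \<theta> t *v (traj \<theta> x0 t + a + alpha T c t *\<^sub>R b)"
      using y by (simp add: ctrl_def algebra_simps)
    let ?Q = "\<theta> t"
    have Q: "orthogonal_matrix ?Q" using orthM tT by simp
    have e: "?y (Suc t) = traj \<theta> x0 (Suc t) + ?Q *v a + ?Q *v (alpha T c t *\<^sub>R b)"
      using step by (simp add: matrix_vector_right_distrib)
    show ?case
    proof (intro exI conjI)
      show "?y (Suc t) = traj \<theta> x0 (Suc t) + ?Q *v a + ?Q *v (alpha T c t *\<^sub>R b)" by (rule e)
      show "traj \<theta> x0 (Suc t) \<in> Z (Suc t)" using img[OF tT] x by auto
      show "?Q *v a \<in> Z (Suc t)" using img[OF tT] a by auto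
      show "?Q *v (alpha T c t *\<^sub>R b) \<in> orthogonal_comp (Z (Suc t))"
        unfolding orthogonal_comp_def orthogonal_def
      proof safe
        fix w assume "w \<in> Z (Suc t)"
        then obtain v where v: "v \<in> Z t" "w = ?Q *v v" using img[OF tT] by auto
        have "v \<bullet> b = 0" using b v by (auto simp: orthogonal_comp_def orthogonal_def)
        then show "w \<bullet> (?Q *v (alpha T c t *\<^sub>R b)) = 0"
          using v orth_inner[OF Q, of v "alpha T c t *\<^sub>R b"] by simp
      qed
      show "norm (?Q *v a) = norm zpar" using orth_norm[OF Q] na by simp
      show "(norm (?Q *v (alpha T c t *\<^sub>R b)))\<^sup>2 = (\<Prod>s<Suc t. (alpha T c s)\<^sup>2) * (norm zperp)\<^sup>2"
        using orth_norm[OF Q] nb by (simp add: power_mult_distrib)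
    qed
  qed
  show ?thesis
  proof (intro allI impI)
    fix t assume "1 \<le> t \<and> t \<le> T"
    then obtain a b where y: "?y t = traj \<theta> x0 t + a + b" and a: "a \<in> Z t"
      and b: "b \<in> orthogonal_comp (Z t)" and na: "norm a = norm zpar"
      and nb: "(norm b)\<^sup>2 = (\<Prod>s<t. (alpha T c s)\<^sup>2) * (norm zperp)\<^sup>2" using inv by blast
    have "a \<bullet> b = 0" using a b by (auto simp: orthogonal_comp_def orthogonal_def)
    then have "(norm (a + b))\<^sup>2 = (norm a)\<^sup>2 + (norm b)\<^sup>2"
      by (simp add: power2_norm_eq_inner inner_add_left inner_add_right inner_commute)
    then show "(norm (?y t - traj \<theta> x0 t))\<^sup>2
      = (\<Prod>s<t. (alpha T c s)\<^sup>2) * (norm zperp)\<^sup>2 + (norm zpar)\<^sup>2"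
      using y na nb by (simp add: add.assoc)
  qed
qed

end
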